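(* Fix $\theta\in\Theta$ and $0<\varepsilon<1$. Suppose that under $P_\theta$: (a) $2\big(\ell(\hat\theta_n;Y^{(n)})-\ell(\theta;Y^{(n)})\big)\to\chi^2_p$ in distribution; (b) the Laplace approximation holds in the form $q_n(Y^{(n)})=p_n(Y^{(n)};\hat\theta_n)\,\pi(\hat\theta_n)(2\pi)^{p/2}|j_n(\hat\theta_n)|^{-1/2}\,(1+o_p(1))$; (c) $\pi(\hat\theta_n)=O_p(1)$ and $\log|j_n(\hat\theta_n)|=p\log n+O_p(1)$. Then $$\lim_{n\to\infty}P_\theta\big(\theta\in\hat\Theta_{1-\varepsilon}(Y^{(n)})\big)=1 .$$
   Context: $Y^{(n)}=(Y_1,\ldots,Y_n)$ has density $p_n(y^{(n)};\theta)$, $\theta\in\Theta\subseteq\mathbb{R}^p$ open, strictly positive on a support not depending on $\theta$. $\ell(\theta;y^{(n)})=\log p_n(y^{(n)};\theta)$ is the log likelihood, $\hat\theta_n$ the maximum likelihood estimate, and $j_n(\theta)=-\partial^2\ell(\theta;y^{(n)})/\partial\theta\partial\theta^\top$ the observed information, with $|\cdot|$ the determinant. For a strictly positive probability density $\pi$ on $\Theta$, $q_n(y^{(n)})=\int_\Theta p_n(y^{(n)};\theta)\pi(\theta)d\theta$ and Robbins' region is $\hat\Theta_{1-\varepsilon}(y^{(n)})=\{\theta\in\Theta:p_n(y^{(n)};\theta)\ge\varepsilon q_n(y^{(n)})\}$. *)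

theory Defs
  imports "HOL-Probability.Probability"
begin

definition chi2_density :: "nat \<Rightarrow> real \<Rightarrow> real" where
  "chi2_density k x =
     (if x > 0 then x powr (real k / 2 - 1) * exp (- x / 2) / (2 powr (real k / 2) * Gamma (real k / 2))
      else 0)"

definition chi2_distribution :: "nat \<Rightarrow> real measure" where
  "chi2_distribution k = density lborel (\<lambda>x. ennreal (chi2_density k x))"

definition conv_in_distribution :: "'w measure \<Rightarrow> (nat \<Rightarrow> 'w \<Rightarrow> real) \<Rightarrow> real measure \<Rightarrow> bool" where
  "conv_in_distribution M X L \<longleftrightarrow>
     (\<forall>n. X n \<in> borel_measurable M) \<and> weak_conv_m (\<lambda>n. distr M borel (X n)) L"

definition small_o_p_1 :: "'w measure \<Rightarrow> (nat \<Rightarrow> 'w \<Rightarrow> real) \<Rightarrow> bool" where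
  "small_o_p_1 M X \<longleftrightarrow>
     (\<forall>n. X n \<in> borel_measurable M) \<and>
     (\<forall>\<delta>>0. (\<lambda>n. measure M {\<omega>\<in>space M. \<bar>X n \<omega>\<bar> > \<delta>}) \<longlonglongrightarrow> 0)"

definition big_O_p_1 :: "'w measure \<Rightarrow> (nat \<Rightarrow> 'w \<Rightarrow> real) \<Rightarrow> bool" where
  "big_O_p_1 M X \<longleftrightarrow>
     (\<forall>n. X n \<in> borel_measurable M) \<and>
     (\<forall>\<eta>>0. \<exists>K. \<exists>N. \<forall>n\<ge>N. measure M {\<omega>\<in>space M. \<bar>X n \<omega>\<bar> > K} < \<eta>)"

definition partial_deriv :: "'p::finite \<Rightarrow> (real^'p \<Rightarrow> real) \<Rightarrow> real^'p \<Rightarrow> real" where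
  "partial_deriv i f x = deriv (\<lambda>h. f (x + h *\<^sub>R axis i 1)) 0"

definition hessian :: "(real^'p::finite \<Rightarrow> real) \<Rightarrow> real^'p \<Rightarrow> real^'p^'p" where
  "hessian f x = (\<chi> i k. partial_deriv i (partial_deriv k f) x)"

definition loglik :: "('y \<Rightarrow> real^'p \<Rightarrow> real) \<Rightarrow> real^'p \<Rightarrow> 'y \<Rightarrow> real" where
  "loglik pn t y = ln (pn y t)"

definition obs_info :: "('y \<Rightarrow> real^'p::finite \<Rightarrow> real) \<Rightarrow> real^'p \<Rightarrow> 'y \<Rightarrow> real^'p^'p" where
  "obs_info pn t y = - hessian (\<lambda>s. ln (pn y s)) t"

definition marginal :: "(real^'p::finite) set \<Rightarrow> ('y \<Rightarrow> real^'p \<Rightarrow> real) \<Rightarrow> (real^'p \<Rightarrow> real) \<Rightarrow> 'y \<Rightarrow> real" where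
  "marginal \<Theta> pn \<pi> y = (LINT t:\<Theta>|lborel. pn y t * \<pi> t)"

definition robbins_region :: "(real^'p::finite) set \<Rightarrow> ('y \<Rightarrow> real^'p \<Rightarrow> real) \<Rightarrow> (real^'p \<Rightarrow> real) \<Rightarrow> real \<Rightarrow> 'y \<Rightarrow> (real^'p) set" where
  "robbins_region \<Theta> pn \<pi> \<epsilon> y = {t\<in>\<Theta>. pn y t \<ge> \<epsilon> * marginal \<Theta> pn \<pi> y}"

end

theory Submission
  imports Defs
begin

lemma chi2_nn_integral:
  assumes k: "k \<ge> 1"
  shows "(\<integral>\<^sup>+x. ennreal (chi2_density k x) \<partial>lborel) = 1"
proof -
  define s where "s = real k / 2"
  have s: "s > 0" using k by (simp add: s_def)
  have G: "Gamma s > 0" using s by (simp add: Gamma_real_pos)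
  have meas: "(\<lambda>x. ennreal (chi2_density k x)) \<in> borel_measurable borel"
    unfolding chi2_density_def by measurable
  have pt: "2 * chi2_density k (0 + 2 * x) = indicator {0..} x * x powr (s - 1) / exp x / Gamma s" for x :: real
  proof (cases "x > 0")
    case True
    have "(2*x) powr (s - 1) = 2 powr (s-1) * x powr (s-1)" using True by (simp add: powr_mult)
    moreover have "2 powr s = 2 * 2 powr (s-1)" by (simp add: powr_diff)
    moreover have "exp (-(2*x)/2) = 1 / exp x" by (simp add: exp_minus field_simps)
    ultimately show ?thesis using True G unfolding chi2_density_def s_def[symmetric]
      by (simp add: field_simps)
  next
    case False
    then show ?thesis by (cases "x = 0") (auto simp: chi2_density_def indicator_def)
  qed
  have "(\<integral>\<^sup>+x. ennreal (chi2_density k x) \<partial>lborel) = \<bar>2::real\<bar> * (\<integral>\<^sup>+x. ennreal (chi2_density k (0 + 2 * x)) \<partial>lborel)"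
    by (rule nn_integral_real_affine[OF meas]) simp
  also have "\<dots> = (\<integral>\<^sup>+x. ennreal 2 * ennreal (chi2_density k (0 + 2 * x)) \<partial>lborel)"
    by (subst nn_integral_cmult) (use meas in auto)
  also have "\<dots> = (\<integral>\<^sup>+x. ennreal (indicator {0..} x * x powr (s - 1) / exp x) * ennreal (1 / Gamma s) \<partial>lborel)"
  proof (rule nn_integral_cong)
    fix x :: real
    have "ennreal 2 * ennreal (chi2_density k (0 + 2 * x)) = ennreal (2 * chi2_density k (0 + 2 * x))"
      by (simp add: ennreal_mult')
    also have "\<dots> = ennreal (indicator {0..} x * x powr (s - 1) / exp x * (1 / Gamma s))"
      using pt[of x] by simp
    also have "\<dots> = ennreal (indicator {0..} x * x powr (s - 1) / exp x) * ennreal (1 / Gamma s)"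
      using G by (intro ennreal_mult) (auto simp: indicator_def)
    finally show "ennreal 2 * ennreal (chi2_density k (0 + 2 * x)) = \<dots>" .
  qed
  also have "\<dots> = (\<integral>\<^sup>+x. ennreal (indicator {0..} x * x powr (s - 1) / exp x) \<partial>lborel) * ennreal (1 / Gamma s)"
    by (rule nn_integral_multc) measurable
  also have "\<dots> = ennreal (Gamma s) * ennreal (1 / Gamma s)"
    by (simp add: Gamma_conv_nn_integral_real[OF s])
  also have "\<dots> = 1" using G by (simp flip: ennreal_mult)
  finally show ?thesis .
qed

lemma chi2_real_distribution:
  assumes k: "k \<ge> 1"
  shows "real_distribution (chi2_distribution k)"
proof -
  have "prob_space (chi2_distribution k)"
  proof (rule prob_spaceI)
    have "emeasure (chi2_distribution k) UNIV = (\<integral>\<^sup>+x. ennreal (chi2_density k x) * indicator UNIV x \<partial>lborel)"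
      unfolding chi2_distribution_def by (rule emeasure_density) (auto simp: chi2_density_def)
    then show "emeasure (chi2_distribution k) (space (chi2_distribution k)) = 1"
      by (simp add: chi2_distribution_def chi2_nn_integral[OF k])
  qed
  then show ?thesis unfolding real_distribution_def real_distribution_axioms_def
    by (simp add: chi2_distribution_def)
qed


lemma conv_chi2_tight:
  assumes M: "prob_space M" and k: "k \<ge> 1"
    and X: "conv_in_distribution M X (chi2_distribution k)" and eta: "\<eta> > 0"
  shows "\<exists>K N. \<forall>n\<ge>N. measure M {\<omega>\<in>space M. X n \<omega> > K} < \<eta>"
proof -
  interpret P: prob_space M by (rule M)
  interpret C: real_distribution "chi2_distribution k" by (rule chi2_real_distribution[OF k])
  have Xm: "X n \<in> borel_measurable M" for n using X by (simp add: conv_in_distribution_def)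
  have wc: "weak_conv_m (\<lambda>n. distr M borel (X n)) (chi2_distribution k)"
    using X by (simp add: conv_in_distribution_def)
  have "\<forall>\<^sub>F x in at_top. cdf (chi2_distribution k) x > 1 - \<eta>"
    using order_tendstoD(1)[OF C.cdf_lim_at_top_prob] eta by simp
  then obtain K where K: "cdf (chi2_distribution k) K > 1 - \<eta>"
    by (auto simp: eventually_at_top_linorder)
  have "{K} \<in> null_sets (chi2_distribution k)"
  proof -
    have nK: "{K} \<in> null_sets lborel" by (auto simp: null_sets_def)
    have "AE x in lborel. x \<in> {K} \<longrightarrow> ennreal (chi2_density k x) = 0"
      by (rule AE_I'[OF nK]) auto
    moreover have "(\<lambda>x. ennreal (chi2_density k x)) \<in> borel_measurable lborel"
      unfolding chi2_density_def by measurable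
    ultimately show ?thesis unfolding chi2_distribution_def
      by (simp add: null_sets_density_iff)
  qed
  then have "measure (chi2_distribution k) {K} = 0"
    by (simp add: measure_def null_setsD1)
  then have cont: "isCont (cdf (chi2_distribution k)) K" by (simp add: C.isCont_cdf)
  have lim: "(\<lambda>n. cdf (distr M borel (X n)) K) \<longlonglongrightarrow> cdf (chi2_distribution k) K"
    using wc cont by (simp add: weak_conv_m_def weak_conv_def)
  have cdfeq: "cdf (distr M borel (X n)) K = measure M (X n -` {..K} \<inter> space M)" for n
    by (simp add: cdf_def measure_distr Xm)
  have "\<forall>\<^sub>F n in sequentially. cdf (distr M borel (X n)) K > 1 - \<eta>"
    using order_tendstoD(1)[OF lim K] .
  then obtain N where N: "\<And>n. n \<ge> N \<Longrightarrow> cdf (distr M borel (X n)) K > 1 - \<eta>"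
    by (auto simp: eventually_sequentially)
  have "measure M {\<omega>\<in>space M. X n \<omega> > K} < \<eta>" if "n \<ge> N" for n
  proof -
    have A: "X n -` {..K} \<inter> space M \<in> sets M" using Xm by measurable
    have "{\<omega>\<in>space M. X n \<omega> > K} = space M - (X n -` {..K} \<inter> space M)" by auto
    then have "measure M {\<omega>\<in>space M. X n \<omega> > K} = 1 - measure M (X n -` {..K} \<inter> space M)"
      using P.prob_compl[OF A] by simp
    then show ?thesis using N[OF that] cdfeq[of n] by simp
  qed
  then show ?thesis by blast
qed


lemma key_ineq:
  fixes a h A c dp R L lndet \<epsilon> K1 K2 K3 kln :: real
  assumes a: "a > 0" and h: "h > 0" and L: "L = 2 * (ln h - ln a)" "L \<le> K1"
    and A: "0 < A" "A \<le> K2" and c: "c > 0" and dp: "0 \<le> dp" "dp \<le> exp (- lndet / 2)"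
    and D: "\<bar>lndet - kln\<bar> \<le> K3" and R: "\<bar>R\<bar> \<le> 1" and e: "\<epsilon> > 0"
    and C: "\<epsilon> * exp (K1/2) * K2 * c * exp (K3/2) * 2 * exp (- kln/2) \<le> 1"
  shows "\<epsilon> * (h * A * c * dp * (1 + R)) \<le> a"
proof -
  have "L/2 = ln h - ln a" using L(1) by simp
  then have "exp (L/2) = exp (ln h) / exp (ln a)" by (simp only: exp_diff)
  then have "exp (L/2) = h / a" using a h by simp
  then have "h = a * exp (L/2)" using a by simp
  then have h1: "h \<le> a * exp (K1/2)" using a L(2) by simp
  have dp1: "dp \<le> exp (K3/2) * exp (- kln/2)"
  proof -
    have "- lndet / 2 \<le> K3/2 + - kln/2" using D by linarith
    then have "exp (- lndet / 2) \<le> exp (K3/2 + - kln/2)" by simp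
    then have "exp (- lndet / 2) \<le> exp (K3/2) * exp (- kln/2)" by (simp only: exp_add)
    then show ?thesis using dp by linarith
  qed
  have R1: "0 \<le> 1 + R" "1 + R \<le> 2" using R by linarith+
  have "h * A * c * dp * (1 + R) \<le> (a * exp (K1/2)) * K2 * c * (exp (K3/2) * exp (- kln/2)) * 2"
    by (intro mult_mono h1 A(2) dp1 R1 order.refl mult_nonneg_nonneg) (use a h A c dp in auto)
  then have "\<epsilon> * (h * A * c * dp * (1 + R)) \<le> \<epsilon> * ((a * exp (K1/2)) * K2 * c * (exp (K3/2) * exp (- kln/2)) * 2)"
    using e by simp
  also have "\<dots> = a * (\<epsilon> * exp (K1/2) * K2 * c * exp (K3/2) * 2 * exp (- kln/2))" by simp
  also have "\<dots> \<le> a * 1" using C a by (intro mult_left_mono) auto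
  finally show ?thesis by simp
qed

lemma powr_half_bound:
  fixes d :: real
  shows "0 \<le> d powr (- 1 / 2)" "d powr (- 1 / 2) \<le> exp (- ln d / 2)"
  by (auto simp: powr_def)

lemma small_factor:
  fixes C :: real and k :: nat
  assumes k: "k \<ge> 1" and n: "real n > C^2" "n \<ge> 1"
  shows "C * exp (- (real k * ln (real n)) / 2) \<le> 1"
proof (cases "C \<le> 0")
  case True
  have "C * exp (- (real k * ln (real n)) / 2) \<le> 0" using True by (intro mult_nonpos_nonneg) auto
  then show ?thesis by simp
next
  case False
  have lnn: "ln (real n) \<ge> 0" using n by simp
  have "exp (- (real k * ln (real n)) / 2) \<le> exp (- ln (real n) / 2)"
    using k lnn by (simp add: mult_le_cancel_right1 divide_right_mono)
  moreover have "exp (ln (real n) / 2) > C"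
  proof -
    have "exp (ln (real n) / 2) ^ 2 = real n"
      using n by (simp add: exp_double[symmetric] power2_eq_square exp_add[symmetric])
    then have "C^2 < exp (ln (real n) / 2) ^ 2" using n by simp
    then show ?thesis using False by (smt (verit) exp_gt_zero power_mono)
  qed
  then have "C * exp (- ln (real n) / 2) \<le> 1"
    using False by (simp add: exp_minus divide_simps)
  ultimately show ?thesis using False by (smt (verit) mult_left_mono)
qed


theorem mainTheorem11:
  fixes M :: "'w measure"
    and \<nu> :: "nat \<Rightarrow> 'y measure"
    and Y :: "nat \<Rightarrow> 'w \<Rightarrow> 'y"
    and p :: "nat \<Rightarrow> 'y \<Rightarrow> real^'p::finite \<Rightarrow> real"
    and \<Theta> :: "(real^'p) set"
    and \<pi> :: "real^'p \<Rightarrow> real"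
    and \<theta>hat :: "nat \<Rightarrow> 'y \<Rightarrow> real^'p"
    and \<theta> :: "real^'p"
    and \<epsilon> :: real
  assumes M: "prob_space M"
    and \<Theta>_open: "open \<Theta>"
    and \<theta>_in: "\<theta> \<in> \<Theta>"
    and \<epsilon>_pos: "0 < \<epsilon>" and \<epsilon>_lt1: "\<epsilon> < 1"
    and \<nu>_sf: "\<And>n. sigma_finite_measure (\<nu> n)"
    and p_pos: "\<And>n y t. y \<in> space (\<nu> n) \<Longrightarrow> t \<in> \<Theta> \<Longrightarrow> p n y t > 0"
    and p_meas: "\<And>n. (\<lambda>(y, t). p n y t) \<in> borel_measurable (\<nu> n \<Otimes>\<^sub>M lborel)"
    and p_density: "\<And>n t. t \<in> \<Theta> \<Longrightarrow> prob_space (density (\<nu> n) (\<lambda>y. ennreal (p n y t)))"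
    and Y_distr: "\<And>n. distributed M (\<nu> n) (Y n) (\<lambda>y. ennreal (p n y \<theta>))"
    and \<pi>_meas: "\<pi> \<in> borel_measurable lborel"
    and \<pi>_pos: "\<And>t. t \<in> \<Theta> \<Longrightarrow> \<pi> t > 0"
    and \<pi>_int: "set_integrable lborel \<Theta> \<pi>"
    and \<pi>_one: "(LINT t:\<Theta>|lborel. \<pi> t) = 1"
    and \<theta>hat_meas: "\<And>n. \<theta>hat n \<in> borel_measurable (\<nu> n)"
    and \<theta>hat_in: "\<And>n y. y \<in> space (\<nu> n) \<Longrightarrow> \<theta>hat n y \<in> \<Theta>"
    and \<theta>hat_max: "\<And>n y t. y \<in> space (\<nu> n) \<Longrightarrow> t \<in> \<Theta> \<Longrightarrow> p n y t \<le> p n y (\<theta>hat n y)"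
    and a: "conv_in_distribution M
              (\<lambda>n \<omega>. 2 * (loglik (p n) (\<theta>hat n (Y n \<omega>)) (Y n \<omega>) - loglik (p n) \<theta> (Y n \<omega>)))
              (chi2_distribution CARD('p))"
    and b: "\<exists>R. small_o_p_1 M R \<and>
              (\<forall>n. \<forall>\<omega>\<in>space M.
                 marginal \<Theta> (p n) \<pi> (Y n \<omega>) =
                   p n (Y n \<omega>) (\<theta>hat n (Y n \<omega>)) * \<pi> (\<theta>hat n (Y n \<omega>))
                   * (2 * pi) powr (real CARD('p) / 2)
                   * det (obs_info (p n) (\<theta>hat n (Y n \<omega>)) (Y n \<omega>)) powr (- 1 / 2)
                   * (1 + R n \<omega>))"
    and c1: "big_O_p_1 M (\<lambda>n \<omega>. \<pi> (\<theta>hat n (Y n \<omega>)))"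
    and c2: "big_O_p_1 M (\<lambda>n \<omega>. ln (det (obs_info (p n) (\<theta>hat n (Y n \<omega>)) (Y n \<omega>)))
                                     - real CARD('p) * ln (real n))"
  shows "(\<lambda>n. measure M {\<omega>\<in>space M. \<theta> \<in> robbins_region \<Theta> (p n) \<pi> \<epsilon> (Y n \<omega>)}) \<longlonglongrightarrow> 1"
  proof -
  interpret P: prob_space M by (rule M)
  define k where "k = CARD('p)"
  have k1: "k \<ge> 1" unfolding k_def using finite_UNIV_card_ge_0[of] by (simp add: Suc_leI)
  have Ym: "Y n \<in> measurable M (\<nu> n)" for n using Y_distr[of n] by (rule distributed_measurable)
  have Ysp: "\<omega> \<in> space M \<Longrightarrow> Y n \<omega> \<in> space (\<nu> n)" for n \<omega> using Ym[of n] by (rule measurable_space)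
  define L where "L = (\<lambda>n \<omega>. 2 * (loglik (p n) (\<theta>hat n (Y n \<omega>)) (Y n \<omega>) - loglik (p n) \<theta> (Y n \<omega>)))"
  define A where "A = (\<lambda>n \<omega>. \<pi> (\<theta>hat n (Y n \<omega>)))"
  define D where "D = (\<lambda>n \<omega>. ln (det (obs_info (p n) (\<theta>hat n (Y n \<omega>)) (Y n \<omega>))) - real CARD('p) * ln (real n))"
  obtain R where R: "small_o_p_1 M R" and Req: "\<And>n \<omega>. \<omega> \<in> space M \<Longrightarrow>
                 marginal \<Theta> (p n) \<pi> (Y n \<omega>) =
                   p n (Y n \<omega>) (\<theta>hat n (Y n \<omega>)) * \<pi> (\<theta>hat n (Y n \<omega>))
                   * (2 * pi) powr (real CARD('p) / 2)
                   * det (obs_info (p n) (\<theta>hat n (Y n \<omega>)) (Y n \<omega>)) powr (- 1 / 2)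
                   * (1 + R n \<omega>)"
    using b by blast
  define E where "E = (\<lambda>n. {\<omega>\<in>space M. \<theta> \<in> robbins_region \<Theta> (p n) \<pi> \<epsilon> (Y n \<omega>)})"
  have Lm: "L n \<in> borel_measurable M" for n using a unfolding L_def conv_in_distribution_def by blast
  have Am: "A n \<in> borel_measurable M" for n using c1 unfolding A_def big_O_p_1_def by blast
  have Dm: "D n \<in> borel_measurable M" for n using c2 unfolding D_def big_O_p_1_def by blast
  have Rm: "R n \<in> borel_measurable M" for n using R unfolding small_o_p_1_def by blast
  have Em: "E n \<in> sets M" for n
  proof -
    have pm[measurable]: "(\<lambda>(y, t). p n y t) \<in> borel_measurable (\<nu> n \<Otimes>\<^sub>M lborel)" by (rule p_meas)
    have [measurable]: "\<pi> \<in> borel_measurable lborel" by (rule \<pi>_meas)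
    have Ts[measurable]: "\<Theta> \<in> sets lborel" using \<Theta>_open by simp
    have g1: "(\<lambda>y. p n y \<theta>) \<in> borel_measurable (\<nu> n)"
    proof -
      have "(\<lambda>y. (\<lambda>(y, t). p n y t) (y, \<theta>)) \<in> borel_measurable (\<nu> n)"
        by measurable
      then show ?thesis by simp
    qed
    have g2: "(\<lambda>y. marginal \<Theta> (p n) \<pi> y) \<in> borel_measurable (\<nu> n)"
    proof -
      have "case_prod (\<lambda>y t. indicator \<Theta> t *\<^sub>R (p n y t * \<pi> t)) \<in> borel_measurable (\<nu> n \<Otimes>\<^sub>M lborel)"
      proof -
        have "(\<lambda>x. indicator \<Theta> (snd x) *\<^sub>R ((\<lambda>(y, t). p n y t) x * \<pi> (snd x))) \<in> borel_measurable (\<nu> n \<Otimes>\<^sub>M lborel)"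
          by measurable
        moreover have "(\<lambda>x. indicator \<Theta> (snd x) *\<^sub>R ((\<lambda>(y, t). p n y t) x * \<pi> (snd x))) = case_prod (\<lambda>y t. indicator \<Theta> t *\<^sub>R (p n y t * \<pi> t))"
          by (auto simp: fun_eq_iff)
        ultimately show ?thesis by simp
      qed
      from lborel.borel_measurable_lebesgue_integral[OF this]
      show ?thesis unfolding marginal_def set_lebesgue_integral_def .
    qed
    have "E n = {\<omega>\<in>space M. \<epsilon> * marginal \<Theta> (p n) \<pi> (Y n \<omega>) \<le> p n (Y n \<omega>) \<theta>}"
      using \<theta>_in by (auto simp: E_def robbins_region_def)
    also have "\<dots> \<in> sets M"
      using measurable_compose[OF Ym g1] measurable_compose[OF Ym g2]
      by (intro borel_measurable_le) (auto intro: borel_measurable_times borel_measurable_const)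
    finally show ?thesis .
  qed
  define c where "c = (2 * pi) powr (real k / 2)"
  have cpos: "c > 0" unfolding c_def by simp
  have incl: "\<omega> \<in> E n" if w: "\<omega> \<in> space M" and hL: "L n \<omega> \<le> K1" and hA: "\<bar>A n \<omega>\<bar> \<le> K2"
    and hD: "\<bar>D n \<omega>\<bar> \<le> K3" and hR: "\<bar>R n \<omega>\<bar> \<le> 1"
    and hC: "\<epsilon> * exp (K1/2) * K2 * c * exp (K3/2) * 2 * exp (- (real k * ln (real n))/2) \<le> 1"
    for n \<omega> K1 K2 K3
  proof -
    define y where "y = Y n \<omega>"
    have y: "y \<in> space (\<nu> n)" unfolding y_def using Ysp[OF w] .
    have th: "\<theta>hat n y \<in> \<Theta>" using \<theta>hat_in[OF y] .
    have ap: "p n y \<theta> > 0" using p_pos[OF y \<theta>_in] .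
    have hp: "p n y (\<theta>hat n y) > 0" using p_pos[OF y th] .
    have Ap: "\<pi> (\<theta>hat n y) > 0" using \<pi>_pos[OF th] .
    have "\<epsilon> * (p n y (\<theta>hat n y) * \<pi> (\<theta>hat n y) * c
            * det (obs_info (p n) (\<theta>hat n y) y) powr (- 1 / 2) * (1 + R n \<omega>)) \<le> p n y \<theta>"
    proof (rule key_ineq[OF ap hp _ _ Ap _ cpos powr_half_bound(1) powr_half_bound(2) _ hR \<epsilon>_pos hC])
      show "L n \<omega> = 2 * (ln (p n y (\<theta>hat n y)) - ln (p n y \<theta>))"
        by (simp add: L_def loglik_def y_def)
      show "L n \<omega> \<le> K1" by (rule hL)
      show "\<pi> (\<theta>hat n y) \<le> K2" using hA by (simp add: A_def y_def)
      show "\<bar>ln (det (obs_info (p n) (\<theta>hat n y) y)) - real k * ln (real n)\<bar> \<le> K3"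
        using hD by (simp add: D_def y_def k_def)
    qed
    then show ?thesis using Req[OF w, of n] \<theta>_in
      by (simp add: E_def robbins_region_def w y_def c_def k_def)
  qed
  have "(\<lambda>n. measure M (E n)) \<longlonglongrightarrow> 1"
  proof (rule LIMSEQ_I)
    fix r :: real assume r: "r > 0"
    define \<eta> where "\<eta> = r / 8"
    have eta: "\<eta> > 0" using r by (simp add: \<eta>_def)
    have aL: "conv_in_distribution M L (chi2_distribution k)" using a by (simp add: L_def k_def)
    obtain K1 N1 where N1: "\<And>n. n \<ge> N1 \<Longrightarrow> measure M {\<omega>\<in>space M. L n \<omega> > K1} < \<eta>"
      using conv_chi2_tight[OF M k1 aL eta] by blast
    obtain K2 N2 where N2: "\<And>n. n \<ge> N2 \<Longrightarrow> measure M {\<omega>\<in>space M. \<bar>A n \<omega>\<bar> > K2} < \<eta>"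
      using c1 eta unfolding big_O_p_1_def A_def by blast
    obtain K3 N3 where N3: "\<And>n. n \<ge> N3 \<Longrightarrow> measure M {\<omega>\<in>space M. \<bar>D n \<omega>\<bar> > K3} < \<eta>"
      using c2 eta unfolding big_O_p_1_def D_def by blast
    have "(\<lambda>n. measure M {\<omega>\<in>space M. \<bar>R n \<omega>\<bar> > 1}) \<longlonglongrightarrow> 0"
      using R unfolding small_o_p_1_def by simp
    from order_tendstoD(2)[OF this eta] obtain N4 where
      N4: "\<And>n. n \<ge> N4 \<Longrightarrow> measure M {\<omega>\<in>space M. \<bar>R n \<omega>\<bar> > 1} < \<eta>"
      by (auto simp: eventually_sequentially)
    define C where "C = \<epsilon> * exp (K1/2) * K2 * c * exp (K3/2) * 2"
    define N5 where "N5 = nat \<lceil>C^2\<rceil> + 1"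
    have "\<forall>n\<ge>max (max N1 N2) (max (max N3 N4) N5). norm (measure M (E n) - 1) < r"
    proof (intro allI impI)
      fix n assume "n \<ge> max (max N1 N2) (max (max N3 N4) N5)"
      then have n: "n \<ge> N1" "n \<ge> N2" "n \<ge> N3" "n \<ge> N4" "n \<ge> N5" by auto
      have nC: "real n > C^2" "n \<ge> 1" using n(5) unfolding N5_def by linarith+
      have hC: "\<epsilon> * exp (K1/2) * K2 * c * exp (K3/2) * 2 * exp (- (real k * ln (real n))/2) \<le> 1"
        using small_factor[OF k1 nC] by (simp add: C_def)
      define B1 where "B1 = {\<omega>\<in>space M. L n \<omega> > K1}"
      define B2 where "B2 = {\<omega>\<in>space M. \<bar>A n \<omega>\<bar> > K2}"
      define B3 where "B3 = {\<omega>\<in>space M. \<bar>D n \<omega>\<bar> > K3}"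
      define B4 where "B4 = {\<omega>\<in>space M. \<bar>R n \<omega>\<bar> > 1}"
      have B1m: "B1 \<in> sets M" unfolding B1_def using Lm by measurable
      have B2m: "B2 \<in> sets M" unfolding B2_def using Am by measurable
      have B3m: "B3 \<in> sets M" unfolding B3_def using Dm by measurable
      have B4m: "B4 \<in> sets M" unfolding B4_def using Rm by measurable
      have sub: "space M - E n \<subseteq> B1 \<union> (B2 \<union> (B3 \<union> B4))"
        using incl[of _ n K1 K2 K3, OF _ _ _ _ _ hC] unfolding B1_def B2_def B3_def B4_def
        by (force simp: not_less)
      have "measure M (space M - E n) \<le> measure M (B1 \<union> (B2 \<union> (B3 \<union> B4)))"
        using sub B1m B2m B3m B4m by (intro P.finite_measure_mono) auto
      also have "\<dots> \<le> measure M B1 + (measure M B2 + (measure M B3 + measure M B4))"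
        using B1m B2m B3m B4m measure_Un_le
        by (smt (verit, best) sets.Un)
      also have "\<dots> < 4 * \<eta>"
        using N1[OF n(1)] N2[OF n(2)] N3[OF n(3)] N4[OF n(4)]
        unfolding B1_def B2_def B3_def B4_def by simp
      finally have lt: "measure M (space M - E n) < 4 * \<eta>" .
      have "measure M (space M - E n) = 1 - measure M (E n)" using P.prob_compl[OF Em] .
      moreover have "measure M (E n) \<le> 1" by (rule P.prob_le_1)
      ultimately show "norm (measure M (E n) - 1) < r" using lt r by (simp add: \<eta>_def)
    qed
    then show "\<exists>no. \<forall>n\<ge>no. norm (measure M (E n) - 1) < r" by blast
  qed
  then show ?thesis by (simp add: E_def)
qed

end
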